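(* Assume that $A_1,\dots,A_d$ are mutually independent, and that they are mutually independent conditionally on $\hat Y$, i.e. for every $y\in\mathcal Y$ and $a=(a_1,\dots,a_d)\in\mathcal A$, $p_{A\mid \hat Y}(a\mid y)=\prod_{k=1}^d p_{A_k\mid\hat Y}(a_k\mid y)$. Then $$u^*=\sup_{y\in\mathcal Y}\sum_{k=1}^d\ \sup_{(a_k,a_k')\in\mathcal A_k^2} u_k(y,a_k,a_k')\ \le\ \sum_{k=1}^d u_k^* .$$
   Context: Let $\hat Y=h(X)$ be the prediction of a fixed deterministic classifier, taking values in a finite set $\mathcal Y$, and let $A=(A_1,\dots,A_d)$ be a random vector of protected attributes, $A_k$ taking values in a finite set $\mathcal A_k$, $\mathcal A=\mathcal A_1\times\dots\times\mathcal A_d$. Write $p_V(v)=\Pr(V=v)$, $p_{V,W}(v,w)=\Pr(V=v,W=w)$ and $p_{V\mid W}(v\mid w)=\Pr(V=v\mid W=w)$. Assume $p_{A,\hat Y}(a,y)>0$ for all $(a,y)\in\mathcal A\times\mathcal Y$. For $y\in\mathcal Y$, $a,a'\in\mathcal A$, set $u(y,a,a')=\big|\log\big(p_{\hat Y\mid A}(y\mid a)/p_{\hat Y\mid A}(y\mid a')\big)\big|$ and the intersectional unfairness $u^*=\sup_{y\in\mathcal Y}\sup_{(a,a')\in\mathcal A^2}u(y,a,a')$. For each $k$ and $a_k,a_k'\in\mathcal A_k$, set $u_k(y,a_k,a_k')=\big|\log\big(p_{\hat Y\mid A_k}(y\mid a_k)/p_{\hat Y\mid A_k}(y\mid a_k')\big)\big|$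 and the marginal unfairness $u_k^*=\sup_{y\in\mathcal Y}\sup_{(a_k,a_k')\in\mathcal A_k^2}u_k(y,a_k,a_k')$. *)

theory Defs
  imports "HOL-Probability.Probability_Mass_Function"
begin

text \<open>Finite model: a pmf M on a sample space; Yh is the prediction \<open>\<hat>Y = h(X)\<close>,
  Ak k (k < d) are the protected attributes. All probabilities are taken w.r.t. M.\<close>

definition prb :: "'w pmf \<Rightarrow> ('w \<Rightarrow> bool) \<Rightarrow> real" where
  "prb M E = measure_pmf.prob M {w. E w}"

definition cprb :: "'w pmf \<Rightarrow> ('w \<Rightarrow> bool) \<Rightarrow> ('w \<Rightarrow> bool) \<Rightarrow> real" where
  "cprb M E F = prb M (\<lambda>w. E w \<and> F w) / prb M F"

definition evA :: "nat \<Rightarrow> (nat \<Rightarrow> 'w \<Rightarrow> 'a) \<Rightarrow> (nat \<Rightarrow> 'a) \<Rightarrow> 'w \<Rightarrow> bool" where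
  "evA d A a w = (\<forall>k<d. A k w = a k)"

definition u_int :: "'w pmf \<Rightarrow> nat \<Rightarrow> (nat \<Rightarrow> 'w \<Rightarrow> 'a) \<Rightarrow> ('w \<Rightarrow> 'y) \<Rightarrow> 'y \<Rightarrow> (nat \<Rightarrow> 'a) \<Rightarrow> (nat \<Rightarrow> 'a) \<Rightarrow> real" where
  "u_int M d A Yh y a a' =
     \<bar>ln (cprb M (\<lambda>w. Yh w = y) (evA d A a) / cprb M (\<lambda>w. Yh w = y) (evA d A a'))\<bar>"

definition u_star :: "'w pmf \<Rightarrow> nat \<Rightarrow> (nat \<Rightarrow> 'w \<Rightarrow> 'a) \<Rightarrow> (nat \<Rightarrow> 'a set) \<Rightarrow> ('w \<Rightarrow> 'y) \<Rightarrow> 'y set \<Rightarrow> real" where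
  "u_star M d A As Yh Ys =
     (SUP y\<in>Ys. SUP aa'\<in>(PiE {..<d} As \<times> PiE {..<d} As). u_int M d A Yh y (fst aa') (snd aa'))"

definition u_marg :: "'w pmf \<Rightarrow> (nat \<Rightarrow> 'w \<Rightarrow> 'a) \<Rightarrow> ('w \<Rightarrow> 'y) \<Rightarrow> nat \<Rightarrow> 'y \<Rightarrow> 'a \<Rightarrow> 'a \<Rightarrow> real" where
  "u_marg M A Yh k y b b' =
     \<bar>ln (cprb M (\<lambda>w. Yh w = y) (\<lambda>w. A k w = b) / cprb M (\<lambda>w. Yh w = y) (\<lambda>w. A k w = b'))\<bar>"

definition u_marg_star :: "'w pmf \<Rightarrow> (nat \<Rightarrow> 'w \<Rightarrow> 'a) \<Rightarrow> (nat \<Rightarrow> 'a set) \<Rightarrow> ('w \<Rightarrow> 'y) \<Rightarrow> 'y set \<Rightarrow> nat \<Rightarrow> real" where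
  "u_marg_star M A As Yh Ys k =
     (SUP y\<in>Ys. SUP bb'\<in>(As k \<times> As k). u_marg M A Yh k y (fst bb') (snd bb'))"

end

theory Submission
  imports Defs begin

lemma sup_sum_abs:
  fixes g :: "nat \<Rightarrow> 'a \<Rightarrow> 'a \<Rightarrow> real"
  assumes fin: "\<And>k. k<d \<Longrightarrow> finite (S k)" and ne: "\<And>k. k<d \<Longrightarrow> S k \<noteq> {}"
    and anti: "\<And>k b b'. k<d \<Longrightarrow> b\<in>S k \<Longrightarrow> b'\<in>S k \<Longrightarrow> g k b' b = - g k b b'"
  shows "(SUP aa'\<in>PiE {..<d} S \<times> PiE {..<d} S. \<bar>\<Sum>k<d. g k (fst aa' k) (snd aa' k)\<bar>)
       = (\<Sum>k<d. SUP bb'\<in>S k \<times> S k. \<bar>g k (fst bb') (snd bb')\<bar>)"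
proof -
  define m where "m k = (SUP bb'\<in>S k \<times> S k. \<bar>g k (fst bb') (snd bb')\<bar>)" for k
  have upper: "\<bar>g k b b'\<bar> \<le> m k" if "k<d" "b\<in>S k" "b'\<in>S k" for k b b'
    unfolding m_def
    by (rule cSUP_upper2[where x="(b,b')"]) (use that fin in \<open>auto intro!: bdd_above_finite\<close>)
  have attain: "\<exists>p\<in>S k \<times> S k. g k (fst p) (snd p) = m k" if k: "k<d" for k
  proof -
    let ?f = "\<lambda>bb'. \<bar>g k (fst bb') (snd bb')\<bar>"
    have "m k = Max (?f ` (S k \<times> S k))" unfolding m_def
      using fin[OF k] ne[OF k] by (simp add: cSup_eq_Max)
    also have "\<dots> \<in> ?f ` (S k \<times> S k)" using fin[OF k] ne[OF k] by (intro Max_in) auto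
    finally obtain b b' where bb: "b\<in>S k" "b'\<in>S k" "m k = \<bar>g k b b'\<bar>" by auto
    show ?thesis
    proof (cases "g k b b' \<ge> 0")
      case True thus ?thesis using bb by (intro bexI[where x="(b,b')"]) auto
    next
      case False thus ?thesis using bb anti[OF k bb(1,2)] by (intro bexI[where x="(b',b)"]) auto
    qed
  qed
  then obtain P where P: "\<forall>k\<in>{..<d}. P k \<in> S k \<times> S k \<and> g k (fst (P k)) (snd (P k)) = m k"
    using bchoice[of "{..<d}" "\<lambda>k p. p \<in> S k \<times> S k \<and> g k (fst p) (snd p) = m k"] by blast
  define a where "a = restrict (\<lambda>k. fst (P k)) {..<d}"
  define a' where "a' = restrict (\<lambda>k. snd (P k)) {..<d}"
  have Pk: "fst (P k) \<in> S k" "snd (P k) \<in> S k" if "k<d" for k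
    using P that by (auto simp: mem_Times_iff)
  have aP: "(a, a') \<in> PiE {..<d} S \<times> PiE {..<d} S"
    unfolding a_def a'_def using Pk by (auto simp: PiE_iff)
  have sa: "(\<Sum>k<d. g k (a k) (a' k)) = (\<Sum>k<d. m k)"
    using P unfolding a_def a'_def by (intro sum.cong) auto
  have finP: "finite (PiE {..<d} S \<times> PiE {..<d} S)" using fin by (auto intro!: finite_PiE)
  show ?thesis unfolding m_def[symmetric]
  proof (rule antisym)
    show "(SUP aa'\<in>PiE {..<d} S \<times> PiE {..<d} S. \<bar>\<Sum>k<d. g k (fst aa' k) (snd aa' k)\<bar>) \<le> (\<Sum>k<d. m k)"
    proof (rule cSUP_least)
      show "PiE {..<d} S \<times> PiE {..<d} S \<noteq> {}" using aP by blast
      fix x assume x: "x \<in> PiE {..<d} S \<times> PiE {..<d} S"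
      have "\<bar>\<Sum>k<d. g k (fst x k) (snd x k)\<bar> \<le> (\<Sum>k<d. \<bar>g k (fst x k) (snd x k)\<bar>)" by (rule sum_abs)
      also have "\<dots> \<le> (\<Sum>k<d. m k)"
      proof (rule sum_mono)
        fix k assume k: "k \<in> {..<d}"
        have "fst x \<in> PiE {..<d} S" "snd x \<in> PiE {..<d} S" using x by (auto simp: mem_Times_iff)
        hence "fst x k \<in> S k" "snd x k \<in> S k" using k by (auto simp: PiE_iff)
        thus "\<bar>g k (fst x k) (snd x k)\<bar> \<le> m k" using k by (intro upper) auto
      qed
      finally show "\<bar>\<Sum>k<d. g k (fst x k) (snd x k)\<bar> \<le> (\<Sum>k<d. m k)" .
    qed
    show "(\<Sum>k<d. m k) \<le> (SUP aa'\<in>PiE {..<d} S \<times> PiE {..<d} S. \<bar>\<Sum>k<d. g k (fst aa' k) (snd aa' k)\<bar>)"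
      by (rule cSUP_upper2[OF _ aP]) (use finP sa in \<open>auto intro!: bdd_above_finite\<close>)
  qed
qed
theorem theorem1:
  fixes M :: "'w pmf" and d :: nat
    and A :: "nat \<Rightarrow> 'w \<Rightarrow> 'a" and As :: "nat \<Rightarrow> 'a set"
    and Yh :: "'w \<Rightarrow> 'y" and Ys :: "'y set"
  assumes finAs: "\<And>k. k < d \<Longrightarrow> finite (As k)"
    and finYs: "finite Ys"
    and rangeA: "\<And>k w. k < d \<Longrightarrow> w \<in> set_pmf M \<Longrightarrow> A k w \<in> As k"
    and rangeY: "\<And>w. w \<in> set_pmf M \<Longrightarrow> Yh w \<in> Ys"
    and pos: "\<And>a y. a \<in> PiE {..<d} As \<Longrightarrow> y \<in> Ys \<Longrightarrow>
                prb M (\<lambda>w. evA d A a w \<and> Yh w = y) > 0"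
    and indep: "\<And>a. a \<in> PiE {..<d} As \<Longrightarrow>
                prb M (evA d A a) = (\<Prod>k<d. prb M (\<lambda>w. A k w = a k))"
    and cond_indep: "\<And>a y. a \<in> PiE {..<d} As \<Longrightarrow> y \<in> Ys \<Longrightarrow>
                cprb M (evA d A a) (\<lambda>w. Yh w = y)
                  = (\<Prod>k<d. cprb M (\<lambda>w. A k w = a k) (\<lambda>w. Yh w = y))"
  shows "u_star M d A As Yh Ys
           = (SUP y\<in>Ys. \<Sum>k<d. SUP bb'\<in>(As k \<times> As k). u_marg M A Yh k y (fst bb') (snd bb'))
         \<and> (SUP y\<in>Ys. \<Sum>k<d. SUP bb'\<in>(As k \<times> As k). u_marg M A Yh k y (fst bb') (snd bb'))
           \<le> (\<Sum>k<d. u_marg_star M A As Yh Ys k)"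
  proof -
  have prb_mono: "prb M E \<le> prb M F" if "\<And>w. E w \<Longrightarrow> F w" for E F
    unfolding prb_def using that by (intro measure_pmf.finite_measure_mono) auto
  have prb_comm: "prb M (\<lambda>w. E w \<and> F w) = prb M (\<lambda>w. F w \<and> E w)" for E F
    by (simp add: conj_commute)
  obtain w0 where w0: "w0 \<in> set_pmf M" using set_pmf_not_empty[of M] by blast
  have neYs: "Ys \<noteq> {}" using rangeY[OF w0] by auto
  have neAs: "As k \<noteq> {}" if "k<d" for k using rangeA[OF that w0] by auto
  have nePi: "PiE {..<d} As \<noteq> {}" using neAs by (simp add: PiE_eq_empty_iff)
  have ext: "\<exists>a\<in>PiE {..<d} As. a k = b" if "k<d" "b \<in> As k" for k b
  proof -
    obtain a where a: "a \<in> PiE {..<d} As" using nePi by blast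
    have "a(k:=b) \<in> PiE {..<d} As"
    proof (rule PiE_I)
      fix i assume "i \<in> {..<d}" thus "(a(k:=b)) i \<in> As i" using a that by (cases "i = k") auto
    next
      fix i assume i: "i \<notin> {..<d}" hence "i \<noteq> k" using that by auto
      thus "(a(k:=b)) i = undefined" using a i by auto
    qed
    thus ?thesis by (intro bexI[where x="a(k:=b)"]) auto
  qed
  have posAY: "prb M (\<lambda>w. A k w = b \<and> Yh w = y) > 0" if k: "k<d" and b: "b \<in> As k" and y: "y \<in> Ys" for k b y
  proof -
    obtain a where a: "a\<in>PiE {..<d} As" "a k = b" using ext[OF k b] by blast
    have "0 < prb M (\<lambda>w. evA d A a w \<and> Yh w = y)" using pos a y by auto
    also have "\<dots> \<le> prb M (\<lambda>w. A k w = b \<and> Yh w = y)"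
      using a k by (intro prb_mono) (auto simp: evA_def)
    finally show ?thesis .
  qed
  have posA: "prb M (\<lambda>w. A k w = b) > 0" if "k<d" "b \<in> As k" "y \<in> Ys" for k b y
    using posAY[OF that] prb_mono[of "\<lambda>w. A k w = b \<and> Yh w = y" "\<lambda>w. A k w = b"] by auto
  have posY: "prb M (\<lambda>w. Yh w = y) > 0" if "y \<in> Ys" for y
  proof -
    obtain a where a: "a\<in>PiE {..<d} As" using nePi by blast
    show ?thesis using pos[OF a that] prb_mono[of "\<lambda>w. evA d A a w \<and> Yh w = y" "\<lambda>w. Yh w = y"] by auto
  qed
  have posE: "prb M (evA d A a) > 0" if "a\<in>PiE {..<d} As" "y \<in> Ys" for a y
    using pos[OF that] prb_mono[of "\<lambda>w. evA d A a w \<and> Yh w = y" "evA d A a"] by auto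
  define c where "c k y b = cprb M (\<lambda>w. Yh w = y) (\<lambda>w. A k w = b)" for k y b
  define q where "q y = prb M (\<lambda>w. Yh w = y)" for y
  have cpos: "c k y b > 0" if "k<d" "b \<in> As k" "y \<in> Ys" for k b y
    unfolding c_def cprb_def using posA[OF that] posAY[OF that]
    by (subst prb_comm) simp
  have key: "cprb M (\<lambda>w. Yh w = y) (evA d A a) = q y * (\<Prod>k<d. c k y (a k) / q y)"
    if a: "a\<in>PiE {..<d} As" and y: "y \<in> Ys" for a y
  proof -
    have q0: "q y > 0" using posY[OF y] by (simp add: q_def)
    have "prb M (\<lambda>w. evA d A a w \<and> Yh w = y) = q y * cprb M (evA d A a) (\<lambda>w. Yh w = y)"
      using q0 by (simp add: cprb_def q_def)
    also have "\<dots> = q y * (\<Prod>k<d. prb M (\<lambda>w. A k w = a k \<and> Yh w = y) / q y)"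
      using cond_indep[OF a y] by (simp add: cprb_def q_def)
    finally have num: "prb M (\<lambda>w. evA d A a w \<and> Yh w = y) = q y * (\<Prod>k<d. prb M (\<lambda>w. A k w = a k \<and> Yh w = y) / q y)" .
    have "cprb M (\<lambda>w. Yh w = y) (evA d A a) = prb M (\<lambda>w. evA d A a w \<and> Yh w = y) / prb M (evA d A a)"
      unfolding cprb_def by (subst prb_comm) simp
    also have "\<dots> = q y * ((\<Prod>k<d. prb M (\<lambda>w. A k w = a k \<and> Yh w = y) / q y) / (\<Prod>k<d. prb M (\<lambda>w. A k w = a k)))"
      using num indep[OF a] by simp
    also have "(\<Prod>k<d. prb M (\<lambda>w. A k w = a k \<and> Yh w = y) / q y) / (\<Prod>k<d. prb M (\<lambda>w. A k w = a k))
        = (\<Prod>k<d. prb M (\<lambda>w. A k w = a k \<and> Yh w = y) / q y / prb M (\<lambda>w. A k w = a k))"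
      by (rule prod_dividef[symmetric])
    also have "\<dots> = (\<Prod>k<d. c k y (a k) / q y)"
    proof (intro prod.cong refl)
      fix k assume "k \<in> {..<d}"
      show "prb M (\<lambda>w. A k w = a k \<and> Yh w = y) / q y / prb M (\<lambda>w. A k w = a k) = c k y (a k) / q y"
        unfolding c_def cprb_def by (subst prb_comm) simp
    qed
    finally show ?thesis .
  qed
  define g where "g y k b b' = ln (c k y b / c k y b')" for y k b b'
  have uint: "u_int M d A Yh y a a' = \<bar>\<Sum>k<d. g y k (a k) (a' k)\<bar>"
    if a: "a\<in>PiE {..<d} As" and a': "a'\<in>PiE {..<d} As" and y: "y \<in> Ys" for a a' y
  proof -
    have q0: "q y > 0" using posY[OF y] by (simp add: q_def)
    have cp: "\<And>k. k \<in> {..<d} \<Longrightarrow> c k y (a k) > 0 \<and> c k y (a' k) > 0"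
      using a a' y cpos by (auto simp: PiE_iff)
    have "cprb M (\<lambda>w. Yh w = y) (evA d A a) / cprb M (\<lambda>w. Yh w = y) (evA d A a')
        = (\<Prod>k<d. c k y (a k) / q y) / (\<Prod>k<d. c k y (a' k) / q y)"
      using key[OF a y] key[OF a' y] q0 by simp
    also have "\<dots> = (\<Prod>k<d. (c k y (a k) / q y) / (c k y (a' k) / q y))" by (rule prod_dividef[symmetric])
    also have "\<dots> = (\<Prod>k<d. c k y (a k) / c k y (a' k))"
      using q0 by (intro prod.cong refl) (simp add: field_simps)
    finally have r: "cprb M (\<lambda>w. Yh w = y) (evA d A a) / cprb M (\<lambda>w. Yh w = y) (evA d A a') = (\<Prod>k<d. c k y (a k) / c k y (a' k))" .
    have "ln (\<Prod>k<d. c k y (a k) / c k y (a' k)) = (\<Sum>k<d. ln (c k y (a k) / c k y (a' k)))"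
      using cp by (intro ln_prod) (auto, (metis less_irrefl)+)
    thus ?thesis unfolding u_int_def r g_def by simp
  qed
  have umarg: "u_marg M A Yh k y b b' = \<bar>g y k b b'\<bar>" for k y b b'
    unfolding u_marg_def g_def c_def by simp
  have eq_y: "(SUP aa'\<in>(PiE {..<d} As \<times> PiE {..<d} As). u_int M d A Yh y (fst aa') (snd aa'))
      = (\<Sum>k<d. SUP bb'\<in>(As k \<times> As k). u_marg M A Yh k y (fst bb') (snd bb'))" if y: "y\<in>Ys" for y
  proof -
    have "(SUP aa'\<in>(PiE {..<d} As \<times> PiE {..<d} As). u_int M d A Yh y (fst aa') (snd aa'))
       = (SUP aa'\<in>(PiE {..<d} As \<times> PiE {..<d} As). \<bar>\<Sum>k<d. g y k (fst aa' k) (snd aa' k)\<bar>)"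
      using uint y by (intro SUP_cong refl) auto
    also have "\<dots> = (\<Sum>k<d. SUP bb'\<in>(As k \<times> As k). \<bar>g y k (fst bb') (snd bb')\<bar>)"
    proof (rule sup_sum_abs)
      fix k b b' assume "k<d" "b \<in> As k" "b' \<in> As k"
      thus "g y k b' b = - g y k b b'"
        using cpos[of k b y] cpos[of k b' y] y unfolding g_def by (simp add: ln_div)
    qed (use finAs neAs in auto)
    finally show ?thesis by (simp add: umarg)
  qed
  have part1: "u_star M d A As Yh Ys
           = (SUP y\<in>Ys. \<Sum>k<d. SUP bb'\<in>(As k \<times> As k). u_marg M A Yh k y (fst bb') (snd bb'))"
    unfolding u_star_def using eq_y by (intro SUP_cong refl) auto
  have part2: "(SUP y\<in>Ys. \<Sum>k<d. SUP bb'\<in>(As k \<times> As k). u_marg M A Yh k y (fst bb') (snd bb'))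
           \<le> (\<Sum>k<d. u_marg_star M A As Yh Ys k)"
  proof (rule cSUP_least[OF neYs])
    fix y assume y: "y \<in> Ys"
    show "(\<Sum>k<d. SUP bb'\<in>(As k \<times> As k). u_marg M A Yh k y (fst bb') (snd bb')) \<le> (\<Sum>k<d. u_marg_star M A As Yh Ys k)"
      unfolding u_marg_star_def
      by (intro sum_mono cSUP_upper2[OF _ y]) (use finYs in \<open>auto intro!: bdd_above_finite\<close>)
  qed
  show ?thesis using part1 part2 by simp
qed

end
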